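(* Let $\psi:[0,\infty)\to[0,\infty)$ be convex, nondecreasing, not identically zero, with $\psi(0)=0$; let $\Psi=e^{\psi}-1$ and, for $L>0$, $\Psi(z;L)=\exp\big(\frac{2}{L^2}\psi(Lz)\big)-1$. Let $Z_1,\dots,Z_m$ be random variables with $\tau\equiv\max_{1\le j\le m}\|Z_j\|_{\Psi}<\infty$. Then $$\Big\|\Big(\max_{1\le j\le m}|Z_j|-\tau\,\Psi^{-1}(m)\Big)_+\Big\|_{\Psi(\cdot;\sqrt6)}\le\sqrt6\,\tau.$$
   Context: For $y>0$, $\Psi^{-1}(y)$ is the unique $x\ge0$ with $\Psi(x)=y$ (so $\Psi^{-1}(m)=\psi^{-1}(\log(1+m))$). The Orlicz norm is $\|X\|_{\Psi}=\inf\{c>0:E\Psi(|X|/c)\le1\}$; $(a)_+=\max(a,0)$. *)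

theory Defs
  imports "HOL-Probability.Probability"
begin

definition Psi_fun :: "(real \<Rightarrow> real) \<Rightarrow> real \<Rightarrow> real" where
  "Psi_fun psi x = exp (psi x) - 1"

definition Psi_L :: "(real \<Rightarrow> real) \<Rightarrow> real \<Rightarrow> real \<Rightarrow> real" where
  "Psi_L psi L z = exp ((2 / L^2) * psi (L * z)) - 1"

definition Psi_inv :: "(real \<Rightarrow> real) \<Rightarrow> real \<Rightarrow> real" where
  "Psi_inv psi y = (THE x. x \<ge> 0 \<and> Psi_fun psi x = y)"

text \<open>Orlicz norm, extended-real valued (infimum of the empty set is infinity).
  The expectation of the nonnegative variable is taken as a nonnegative integral.\<close>
definition orlicz_norm :: "'a measure \<Rightarrow> (real \<Rightarrow> real) \<Rightarrow> ('a \<Rightarrow> real) \<Rightarrow> ereal" where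
  "orlicz_norm M Phi X =
     Inf (ereal ` {c. c > 0 \<and> (\<integral>\<^sup>+ x. ennreal (Phi (\<bar>X x\<bar> / c)) \<partial>M) \<le> 1})"

end

theory Submission
  imports Defs
begin


lemma psi_scale:
  fixes x y :: real
  assumes cv: "convex_on {0..} psi" and p0: "psi 0 = (0::real)"
    and "0 \<le> x" "x \<le> y" "0 < y"
  shows "psi x \<le> (x / y) * psi y"
proof -
  have "psi ((1 - x/y) *\<^sub>R 0 + (x/y) *\<^sub>R y) \<le> (1 - x/y) * psi 0 + (x/y) * psi y"
    by (rule convex_onD[OF cv]) (use assms in auto)
  thus ?thesis using assms by simp
qed

lemma psi_superadd:
  fixes a b :: real
  assumes cv: "convex_on {0..} psi" and p0: "psi 0 = (0::real)"
    and "0 \<le> a" "0 \<le> b"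
  shows "psi a + psi b \<le> psi (a + b)"
proof (cases "a + b = 0")
  case True
  hence "a = 0" "b = 0" using assms by auto
  then show ?thesis using assms by auto
next
  case False
  hence pos: "a + b > 0" using assms by auto
  have "psi a \<le> (a/(a+b)) * psi (a+b)" by (rule psi_scale[OF cv p0]) (use assms pos in auto)
  moreover have "psi b \<le> (b/(a+b)) * psi (a+b)" by (rule psi_scale[OF cv p0]) (use assms pos in auto)
  ultimately have "psi a + psi b \<le> (a/(a+b) + b/(a+b)) * psi (a+b)" by (simp add: distrib_right)
  also have "a/(a+b) + b/(a+b) = 1" using pos by (simp add: add_divide_distrib[symmetric])
  finally show ?thesis by simp
qed

lemma exp_scale:
  fixes s k :: real
  assumes "0 \<le> s" "1 \<le> k"
  shows "exp (s / k) - 1 \<le> (exp s - 1) / k"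
proof -
  have cv: "convex_on UNIV exp" using convex_on_exp[of 1] by simp
  have "exp ((1 - 1/k) *\<^sub>R 0 + (1/k) *\<^sub>R s) \<le> (1 - 1/k) * exp 0 + (1/k) * exp s"
    by (rule convex_onD[OF cv]) (use assms in auto)
  thus ?thesis using assms by (simp add: field_simps)
qed

lemma psi_meas:
  fixes psi :: "real \<Rightarrow> real"
  assumes mono: "mono_on {0..} psi" and X: "X \<in> borel_measurable M" and "0 \<le> c"
  shows "(\<lambda>x. psi (\<bar>X x\<bar> / (c::real))) \<in> borel_measurable M"
proof -
  define psi' where "psi' = (\<lambda>x::real. psi (max 0 x))"
  have "mono psi'" unfolding psi'_def mono_def
    by (auto intro!: mono_onD[OF mono])
  hence pm: "psi' \<in> borel_measurable borel" by (rule borel_measurable_mono)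
  have eq: "(\<lambda>x. psi (\<bar>X x\<bar> / c)) = (\<lambda>x. psi' (\<bar>X x\<bar> / c))"
    unfolding psi'_def using assms by (auto simp: max_def)
  show ?thesis unfolding eq by (rule measurable_compose[OF _ pm]) (use X in measurable)
qed

lemma Psi_meas:
  assumes mono: "mono_on {0..} psi" and X: "X \<in> borel_measurable M" and "0 \<le> c"
  shows "(\<lambda>x. ennreal (Psi_fun psi (\<bar>X x\<bar> / c))) \<in> borel_measurable M"
  unfolding Psi_fun_def using psi_meas[OF assms] by measurable



lemma psi_cont:
  fixes psi :: "real \<Rightarrow> real"
  assumes cv: "convex_on {0..} psi"
  shows "continuous_on {0<..} psi"
  by (rule convex_on_continuous) (auto intro: convex_on_subset[OF cv])

lemma Psi_inv_prop:
  fixes psi :: "real \<Rightarrow> real"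
  assumes cv: "convex_on {0..} psi" and mono: "mono_on {0..} psi"
    and nn: "\<forall>x\<ge>0. psi x \<ge> 0" and p0: "psi 0 = 0" and nz: "\<exists>x\<ge>0. psi x \<noteq> 0"
    and y: "y > 0"
  shows "Psi_inv psi y \<ge> 0 \<and> psi (Psi_inv psi y) = ln (1 + y)"
proof -
  define L where "L = ln (1 + y)"
  have L: "L > 0" unfolding L_def using y by simp
  obtain x1 where x1: "x1 \<ge> 0" "psi x1 \<noteq> 0" using nz by auto
  have px: "psi x1 > 0" using x1 nn by force
  have x1p: "x1 > 0" using x1 p0 by (cases "x1 = 0") auto
  define a where "a = x1 * min 1 (L / psi x1)"
  define b where "b = x1 * max 1 (L / psi x1)"
  have ap: "a > 0" unfolding a_def using x1p px L by auto
  have ax: "a \<le> x1" unfolding a_def using x1p by (simp add: mult_left_le)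
  have bx: "x1 \<le> b" unfolding b_def using x1p by (simp add: mult_le_cancel_left1)
  have "psi a \<le> (a / x1) * psi x1" by (rule psi_scale[OF cv p0]) (use ap ax x1p in auto)
  also have "\<dots> = min 1 (L / psi x1) * psi x1" unfolding a_def using x1p by simp
  also have "\<dots> \<le> L" using px by (auto simp: min_def field_simps)
  finally have pa: "psi a \<le> L" .
  have "psi x1 \<le> (x1 / b) * psi b" by (rule psi_scale[OF cv p0]) (use bx x1p in auto)
  hence "b / x1 * psi x1 \<le> b / x1 * ((x1 / b) * psi b)" using x1p bx by (intro mult_left_mono) auto
  also have "b / x1 * ((x1 / b) * psi b) = psi b" using x1p bx by simp
  finally have "b / x1 * psi x1 \<le> psi b" .
  moreover have "b / x1 * psi x1 = max 1 (L / psi x1) * psi x1" unfolding b_def using x1p by simp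
  moreover have "max 1 (L / psi x1) * psi x1 \<ge> L" using px by (auto simp: max_def field_simps)
  ultimately have pb: "L \<le> psi b" by linarith
  have "continuous_on {a..b} psi"
    by (rule continuous_on_subset[OF psi_cont[OF cv]]) (use ap in auto)
  then obtain u where u: "a \<le> u" "u \<le> b" "psi u = L"
    using IVT'[of psi a L b] pa pb ax bx by auto
  have ex: "\<exists>!x. x \<ge> 0 \<and> Psi_fun psi x = y"
  proof (rule ex1I[of _ u])
    show "u \<ge> 0 \<and> Psi_fun psi u = y" using u ap y unfolding Psi_fun_def L_def by simp
  next
    fix x assume x: "x \<ge> 0 \<and> Psi_fun psi x = y"
    hence "exp (psi x) = 1 + y" unfolding Psi_fun_def by simp
    hence px': "psi x = L" unfolding L_def by (metis ln_exp)
    show "x = u"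
    proof (rule ccontr)
      assume "x \<noteq> u"
      hence "x < u \<or> u < x" by auto
      thus False
      proof
        assume "x < u"
        hence "psi x \<le> (x/u) * psi u" using x ap u by (intro psi_scale[OF cv p0]) auto
        moreover have "(x/u) * L < L" using \<open>x < u\<close> L x ap u 
        proof -
          have "x/u < 1" using \<open>x < u\<close> x ap u by simp
          hence "x/u * L < 1 * L" using L by (intro mult_strict_right_mono) auto
          thus ?thesis by simp
        qed
        ultimately show False using px' u by simp
      next
        assume "u < x"
        hence "psi u \<le> (u/x) * psi x" using x ap u by (intro psi_scale[OF cv p0]) auto
        moreover have "(u/x) * L < L" using \<open>u < x\<close> L x ap u 
        proof -
          have "u/x < 1" using \<open>u < x\<close> x ap u by simp
          hence "u/x * L < 1 * L" using L by (intro mult_strict_right_mono) auto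
          thus ?thesis by simp
        qed
        ultimately show False using px' u by simp
      qed
    qed
  qed
  from theI'[OF ex] have "Psi_inv psi y \<ge> 0" "exp (psi (Psi_inv psi y)) = 1 + y"
    unfolding Psi_inv_def by (auto simp: Psi_fun_def)
  thus ?thesis by (metis ln_exp)
qed

lemma orlicz_lt:
  fixes psi :: "real \<Rightarrow> real"
  assumes mono: "mono_on {0..} psi"
    and lt: "orlicz_norm M (Psi_fun psi) X < ereal t"
  shows "(\<integral>\<^sup>+ x. ennreal (Psi_fun psi (\<bar>X x\<bar> / t)) \<partial>M) \<le> 1"
proof -
  from lt obtain c where c: "c > 0" "(\<integral>\<^sup>+ x. ennreal (Psi_fun psi (\<bar>X x\<bar> / c)) \<partial>M) \<le> 1" "c < t"
    unfolding orlicz_norm_def Inf_less_iff by auto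
  have "(\<integral>\<^sup>+ x. ennreal (Psi_fun psi (\<bar>X x\<bar> / t)) \<partial>M) \<le> (\<integral>\<^sup>+ x. ennreal (Psi_fun psi (\<bar>X x\<bar> / c)) \<partial>M)"
  proof (rule nn_integral_mono)
    fix x
    have "\<bar>X x\<bar> / t \<le> \<bar>X x\<bar> / c" using c by (simp add: frac_le)
    hence "psi (\<bar>X x\<bar> / t) \<le> psi (\<bar>X x\<bar> / c)" using c by (intro mono_onD[OF mono]) auto
    thus "ennreal (Psi_fun psi (\<bar>X x\<bar> / t)) \<le> ennreal (Psi_fun psi (\<bar>X x\<bar> / c))"
      unfolding Psi_fun_def by (intro ennreal_leI) simp
  qed
  with c show ?thesis by simp
qed



lemma orlicz_le:
  fixes psi :: "real \<Rightarrow> real"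
  assumes cv: "convex_on {0..} psi" and mono: "mono_on {0..} psi"
    and X: "X \<in> borel_measurable M"
    and le: "orlicz_norm M (Psi_fun psi) X \<le> ereal t" and t: "t > 0"
  shows "(\<integral>\<^sup>+ x. ennreal (Psi_fun psi (\<bar>X x\<bar> / t)) \<partial>M) \<le> 1"
proof -
  define f where "f n x = ennreal (Psi_fun psi (\<bar>X x\<bar> / (t + 1 / real (Suc n))))" for n x
  have each: "integral\<^sup>N M (f n) \<le> 1" for n
    unfolding f_def
  proof (rule orlicz_lt[OF mono])
    have "ereal t < ereal (t + 1 / real (Suc n))" by simp
    with le show "orlicz_norm M (Psi_fun psi) X < ereal (t + 1 / real (Suc n))" by (rule le_less_trans)
  qed
  have inc: "incseq f"
  proof (rule incseq_SucI, rule le_funI)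
    fix n x
    have "1 / real (Suc (Suc n)) \<le> 1 / real (Suc n)" by (simp add: frac_le)
    hence "\<bar>X x\<bar> / (t + 1 / real (Suc n)) \<le> \<bar>X x\<bar> / (t + 1 / real (Suc (Suc n)))"
      using t by (intro divide_left_mono) (auto intro!: mult_pos_pos add_pos_pos)
    hence "psi (\<bar>X x\<bar> / (t + 1 / real (Suc n))) \<le> psi (\<bar>X x\<bar> / (t + 1 / real (Suc (Suc n))))"
      using t by (intro mono_onD[OF mono]) auto
    thus "f n x \<le> f (Suc n) x" unfolding f_def Psi_fun_def by (intro ennreal_leI) simp
  qed
  have meas: "f n \<in> borel_measurable M" for n
    unfolding f_def using t by (intro Psi_meas[OF mono X]) (auto intro: add_pos_pos less_imp_le)
  have lim: "(\<lambda>n. f n x) \<longlonglongrightarrow> ennreal (Psi_fun psi (\<bar>X x\<bar> / t))" for x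
  proof (cases "X x = 0")
    case True
    then show ?thesis unfolding f_def by simp
  next
    case False
    have z: "(\<lambda>n. 1 / real (Suc n)) \<longlonglongrightarrow> 0"
      using LIMSEQ_Suc[OF lim_1_over_n] .
    have "(\<lambda>n. t + 1 / real (Suc n)) \<longlonglongrightarrow> t + 0"
      by (intro tendsto_add tendsto_const z)
    hence l1: "(\<lambda>n. \<bar>X x\<bar> / (t + 1 / real (Suc n))) \<longlonglongrightarrow> \<bar>X x\<bar> / t"
      using t by (intro tendsto_divide tendsto_const) auto
    have pos: "\<bar>X x\<bar> / t \<in> {0<..}" using False t by auto
    have "isCont psi (\<bar>X x\<bar> / t)"
      using psi_cont[OF cv] pos by (simp add: continuous_on_eq_continuous_at)
    from isCont_tendsto_compose[OF this l1]
    have "(\<lambda>n. psi (\<bar>X x\<bar> / (t + 1 / real (Suc n)))) \<longlonglongrightarrow> psi (\<bar>X x\<bar> / t)" .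
    hence "(\<lambda>n. Psi_fun psi (\<bar>X x\<bar> / (t + 1 / real (Suc n)))) \<longlonglongrightarrow> Psi_fun psi (\<bar>X x\<bar> / t)"
      unfolding Psi_fun_def by (intro tendsto_intros)
    thus ?thesis unfolding f_def by (rule tendsto_ennrealI)
  qed
  have sup: "(SUP n. f n x) = ennreal (Psi_fun psi (\<bar>X x\<bar> / t))" for x
  proof -
    have "incseq (\<lambda>n. f n x)" using inc by (auto simp: incseq_def le_fun_def)
    from LIMSEQ_unique[OF LIMSEQ_SUP[OF this] lim] show ?thesis .
  qed
  have "(\<integral>\<^sup>+ x. ennreal (Psi_fun psi (\<bar>X x\<bar> / t)) \<partial>M) = (\<integral>\<^sup>+ x. (SUP n. f n x) \<partial>M)"
    by (simp add: sup)
  also have "\<dots> = (SUP n. integral\<^sup>N M (f n))"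
    by (rule nn_integral_monotone_convergence_SUP[OF inc meas])
  also have "\<dots> \<le> 1" by (rule SUP_least) (rule each)
  finally show ?thesis .
qed



lemma int_bound:
  fixes p :: "nat \<Rightarrow> 'a \<Rightarrow> real" and F :: "'a \<Rightarrow> real"
  assumes P: "prob_space M" and fin: "finite J"
    and meas: "\<And>j. j \<in> J \<Longrightarrow> (\<lambda>x. ennreal (p j x)) \<in> borel_measurable M"
    and int1: "\<And>j. j \<in> J \<Longrightarrow> (\<integral>\<^sup>+ x. ennreal (p j x) \<partial>M) \<le> 1"
    and pnn: "\<And>j x. j \<in> J \<Longrightarrow> p j x \<ge> 0"
    and c: "c \<ge> 0" and b: "b \<ge> 0"
    and F: "\<And>x. F x \<le> c * (\<Sum>j\<in>J. p j x + b)"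
  shows "(\<integral>\<^sup>+ x. ennreal (F x) \<partial>M) \<le> ennreal (c * (real (card J) * (1 + b)))"
proof -
  have pw: "ennreal (F x) \<le> ennreal c * (\<Sum>j\<in>J. ennreal (p j x) + ennreal b)" for x
  proof -
    have "ennreal (F x) \<le> ennreal (c * (\<Sum>j\<in>J. p j x + b))" using F by (rule ennreal_leI)
    also have "\<dots> = ennreal c * ennreal (\<Sum>j\<in>J. p j x + b)" using c by (rule ennreal_mult')
    also have "ennreal (\<Sum>j\<in>J. p j x + b) = (\<Sum>j\<in>J. ennreal (p j x + b))"
      using pnn b by (intro sum_ennreal[symmetric]) (auto intro: add_nonneg_nonneg)
    also have "\<dots> = (\<Sum>j\<in>J. ennreal (p j x) + ennreal b)"
      using pnn b by (intro sum.cong) (auto simp: ennreal_plus)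
    finally show ?thesis .
  qed
  have "(\<integral>\<^sup>+ x. ennreal (F x) \<partial>M) \<le> (\<integral>\<^sup>+ x. ennreal c * (\<Sum>j\<in>J. ennreal (p j x) + ennreal b) \<partial>M)"
    by (rule nn_integral_mono) (rule pw)
  also have "\<dots> = ennreal c * (\<integral>\<^sup>+ x. (\<Sum>j\<in>J. ennreal (p j x) + ennreal b) \<partial>M)"
    by (rule nn_integral_cmult) (use meas in auto)
  also have "(\<integral>\<^sup>+ x. (\<Sum>j\<in>J. ennreal (p j x) + ennreal b) \<partial>M)
      = (\<Sum>j\<in>J. (\<integral>\<^sup>+ x. ennreal (p j x) + ennreal b \<partial>M))"
    by (rule nn_integral_sum) (use meas in auto)
  also have "\<dots> = (\<Sum>j\<in>J. (\<integral>\<^sup>+ x. ennreal (p j x) \<partial>M) + ennreal b)"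
  proof (rule sum.cong)
    fix j assume j: "j \<in> J"
    have "(\<integral>\<^sup>+ x. ennreal (p j x) + ennreal b \<partial>M) = (\<integral>\<^sup>+ x. ennreal (p j x) \<partial>M) + (\<integral>\<^sup>+ x. ennreal b \<partial>M)"
      by (rule nn_integral_add) (use meas j in auto)
    also have "(\<integral>\<^sup>+ x. ennreal b \<partial>M) = ennreal b"
      using prob_space.emeasure_space_1[OF P] by simp
    finally show "(\<integral>\<^sup>+ x. ennreal (p j x) + ennreal b \<partial>M) = (\<integral>\<^sup>+ x. ennreal (p j x) \<partial>M) + ennreal b" .
  qed simp
  also have "\<dots> \<le> (\<Sum>j\<in>J. 1 + ennreal b)"
    by (intro sum_mono add_right_mono int1)
  also have "\<dots> = ennreal (real (card J) * (1 + b))"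
  proof -
    have e: "ennreal (1 + b) = 1 + ennreal b" using b by simp
    show ?thesis using b by (simp add: ennreal_mult' e ennreal_of_nat_eq_real_of_nat)
  qed
  finally have "(\<integral>\<^sup>+ x. ennreal (F x) \<partial>M) \<le> ennreal c * ennreal (real (card J) * (1 + b))"
    by (simp add: mult_left_mono)
  also have "\<dots> = ennreal (c * (real (card J) * (1 + b)))" using c by (simp add: ennreal_mult')
  finally show ?thesis .
qed

lemma PsiL_eq:
  assumes "t > 0"
  shows "Psi_L psi (sqrt 6) (a / (sqrt 6 * t)) = exp (psi (a / t) / 3) - 1"
proof -
  have "sqrt 6 * (a / (sqrt 6 * t)) = a / t" by simp
  moreover have "2 / (sqrt 6)^2 = (1/3::real)" by simp
  ultimately show ?thesis unfolding Psi_L_def by simp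
qed

lemma Psi_div:
  fixes psi :: "real \<Rightarrow> real"
  assumes cv: "convex_on {0..} psi" and p0: "psi 0 = 0" and nn: "\<forall>x\<ge>0. psi x \<ge> 0"
    and a: "a \<ge> 0" and k: "k \<ge> 1"
  shows "Psi_fun psi (a / k) \<le> Psi_fun psi a / k"
proof (cases "a = 0")
  case True
  then show ?thesis using p0 by (simp add: Psi_fun_def)
next
  case False
  have "psi (a / k) \<le> ((a/k) / a) * psi a"
    by (rule psi_scale[OF cv p0]) (use a k False in \<open>auto simp: divide_le_eq\<close>)
  also have "((a/k) / a) * psi a = psi a / k" using False by simp
  finally have "exp (psi (a / k)) - 1 \<le> exp (psi a / k) - 1" by simp
  also have "\<dots> \<le> (exp (psi a) - 1) / k" by (rule exp_scale) (use nn a k in auto)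
  finally show ?thesis by (simp add: Psi_fun_def)
qed



lemma orlicz_nn: "orlicz_norm M Phi X \<ge> 0"
  unfolding orlicz_norm_def by (rule Inf_greatest) auto

lemma pw_main:
  fixes psi :: "real \<Rightarrow> real" and v :: "nat \<Rightarrow> real"
  assumes cv: "convex_on {0..} psi" and p0: "psi 0 = 0" and nn: "\<forall>x\<ge>0. psi x \<ge> 0"
    and t: "t > 0" and u: "u \<ge> 0" "psi u = ln (1 + real m)"
    and fin: "finite J" and k: "k \<in> J" and vnn: "\<And>j. j \<in> J \<Longrightarrow> v j \<ge> 0"
  shows "exp (psi (max 0 (v k - t * u) / t) / 3) - 1
          \<le> (1 / (3 * (real m + 1))) * (\<Sum>j\<in>J. Psi_fun psi (v j / t) + 1)"
proof -
  define W where "W = max 0 (v k - t * u)"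
  have Wnn: "W \<ge> 0" unfolding W_def by simp
  have pW: "psi (W / t) \<ge> 0" using nn Wnn t by simp
  have s1: "exp (psi (W / t) / 3) - 1 \<le> (exp (psi (W / t)) - 1) / 3"
    by (rule exp_scale) (use pW in auto)
  have s2: "exp (psi (W / t)) - 1 \<le> exp (psi (v k / t)) / (1 + real m)"
  proof (cases "W = 0")
    case True
    then show ?thesis using p0 by (simp add: add_pos_nonneg)
  next
    case False
    hence Wv: "W = v k - t * u" unfolding W_def by (auto simp: max_def split: if_splits)
    hence Wt: "W / t = v k / t - u" using t by (simp add: diff_divide_distrib)
    have "psi (W / t) + psi u \<le> psi (W / t + u)"
      by (rule psi_superadd[OF cv p0]) (use Wnn t u in auto)
    hence "psi (W / t) \<le> psi (v k / t) - ln (1 + real m)" using Wt u by simp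
    hence "exp (psi (W / t)) \<le> exp (psi (v k / t) - ln (1 + real m))" by simp
    also have "\<dots> = exp (psi (v k / t)) / (1 + real m)"
      by (simp add: exp_diff add_pos_nonneg)
    finally show ?thesis by simp
  qed
  have s3: "exp (psi (v k / t)) \<le> (\<Sum>j\<in>J. Psi_fun psi (v j / t) + 1)"
  proof -
    have "exp (psi (v k / t)) = Psi_fun psi (v k / t) + 1" by (simp add: Psi_fun_def)
    also have "\<dots> \<le> (\<Sum>j\<in>J. Psi_fun psi (v j / t) + 1)"
    proof (rule member_le_sum[OF k _ fin])
      fix j assume "j \<in> J - {k}"
      hence "psi (v j / t) \<ge> 0" using nn vnn t by auto
      thus "0 \<le> Psi_fun psi (v j / t) + 1" by (simp add: Psi_fun_def add_increasing)
    qed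
    finally show ?thesis .
  qed
  have "exp (psi (W / t) / 3) - 1 \<le> (exp (psi (v k / t)) / (1 + real m)) / 3"
    using s1 divide_right_mono[OF s2, of 3] by linarith
  also have "\<dots> \<le> ((\<Sum>j\<in>J. Psi_fun psi (v j / t) + 1) / (1 + real m)) / 3"
    using s3 by (intro divide_right_mono) (auto simp: add_pos_nonneg)
  also have "\<dots> = (1 / (3 * (real m + 1))) * (\<Sum>j\<in>J. Psi_fun psi (v j / t) + 1)"
    by (simp add: field_simps)
  finally show ?thesis unfolding W_def .
qed

lemma pw_zero:
  fixes psi :: "real \<Rightarrow> real" and v :: "nat \<Rightarrow> real"
  assumes cv: "convex_on {0..} psi" and p0: "psi 0 = 0" and nn: "\<forall>x\<ge>0. psi x \<ge> 0"
    and s: "s > 0" and m: "m \<ge> 1"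
    and fin: "finite J" and k: "k \<in> J" and vnn: "\<And>j. j \<in> J \<Longrightarrow> v j \<ge> 0"
  shows "exp (psi (v k / s) / 3) - 1
          \<le> (1 / real m) * (\<Sum>j\<in>J. Psi_fun psi (v j / (s / real m)) + 0)"
proof -
  have mp: "real m \<ge> 1" using m by simp
  have pv: "psi (v k / s) \<ge> 0" using nn vnn k s by simp
  have "exp (psi (v k / s) / 3) - 1 \<le> (exp (psi (v k / s)) - 1) / 3"
    by (rule exp_scale) (use pv in auto)
  also have "\<dots> \<le> Psi_fun psi (v k / s)" using pv by (simp add: Psi_fun_def)
  also have "v k / s = (v k / (s / real m)) / real m" using mp by simp
  also have "Psi_fun psi ((v k / (s / real m)) / real m) \<le> Psi_fun psi (v k / (s / real m)) / real m"
    by (rule Psi_div[OF cv p0 nn]) (use vnn k s mp in auto)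
  also have "\<dots> \<le> (\<Sum>j\<in>J. Psi_fun psi (v j / (s / real m)) + 0) / real m"
  proof (intro divide_right_mono)
    have "Psi_fun psi (v k / (s / real m)) \<le> (\<Sum>j\<in>J. Psi_fun psi (v j / (s / real m)))"
    proof (rule member_le_sum[OF k _ fin])
      fix j assume "j \<in> J - {k}"
      hence "psi (v j / (s / real m)) \<ge> 0" using nn vnn s mp by auto
      thus "0 \<le> Psi_fun psi (v j / (s / real m))" by (simp add: Psi_fun_def)
    qed
    thus "Psi_fun psi (v k / (s / real m)) \<le> (\<Sum>j\<in>J. Psi_fun psi (v j / (s / real m)) + 0)"
      by simp
  qed simp
  finally show ?thesis using m by simp
qed



theorem lemma20:
  fixes M :: "'a measure" and psi :: "real \<Rightarrow> real" and Z :: "nat \<Rightarrow> 'a \<Rightarrow> real"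
    and m :: nat and \<tau> :: ereal
  assumes "prob_space M"
    and "convex_on {0..} psi"
    and "mono_on {0..} psi"
    and "\<forall>x\<ge>0. psi x \<ge> 0"
    and "psi 0 = 0"
    and "\<exists>x\<ge>0. psi x \<noteq> 0"
    and "m \<ge> 1"
    and "\<forall>j\<in>{1..m}. Z j \<in> borel_measurable M"
    and "\<tau> = (MAX j\<in>{1..m}. orlicz_norm M (Psi_fun psi) (Z j))"
    and "\<tau> < \<infinity>"
  shows "orlicz_norm M (Psi_L psi (sqrt 6))
           (\<lambda>x. max 0 ((MAX j\<in>{1..m}. \<bar>Z j x\<bar>) - real_of_ereal \<tau> * Psi_inv psi (real m)))
         \<le> ereal (sqrt 6) * \<tau>"
proof -
  note P = assms(1) and cv = assms(2) and mono = assms(3) and nn = assms(4) and p0 = assms(5)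
    and nz = assms(6) and m = assms(7) and Zm = assms(8) and tau = assms(9) and fin_tau = assms(10)
  define J where "J = {1..m}"
  have finJ: "finite J" and neJ: "J \<noteq> {}" and cardJ: "card J = m" using m unfolding J_def by auto
  have le_tau: "orlicz_norm M (Psi_fun psi) (Z j) \<le> \<tau>" if "j \<in> J" for j
    unfolding tau using that finJ unfolding J_def by (intro Max_ge) auto
  have tau_nn: "\<tau> \<ge> 0" using le_tau[of 1] orlicz_nn[of M "Psi_fun psi" "Z 1"] m
    unfolding J_def by force
  define t where "t = real_of_ereal \<tau>"
  have tau_eq: "\<tau> = ereal t" unfolding t_def using tau_nn fin_tau
    by (cases \<tau>) auto
  have t_nn: "t \<ge> 0" using tau_nn tau_eq by simp
  define u where "u = Psi_inv psi (real m)"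
  have u: "u \<ge> 0" "psi u = ln (1 + real m)"
    using Psi_inv_prop[OF cv mono nn p0 nz, of "real m"] m unfolding u_def by auto
  define W where "W x = max 0 ((MAX j\<in>J. \<bar>Z j x\<bar>) - t * u)" for x
  have Wnn: "W x \<ge> 0" for x unfolding W_def by simp
  have maxk: "\<exists>k\<in>J. (MAX j\<in>J. \<bar>Z j x\<bar>) = \<bar>Z k x\<bar>" for x
  proof -
    have "(MAX j\<in>J. \<bar>Z j x\<bar>) \<in> (\<lambda>j. \<bar>Z j x\<bar>) ` J" by (rule Max_in) (use finJ neJ in auto)
    thus ?thesis by auto
  qed
  have meas: "(\<lambda>x. ennreal (Psi_fun psi (\<bar>Z j x\<bar> / c))) \<in> borel_measurable M" if "j \<in> J" "c \<ge> 0" for j c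
    by (rule Psi_meas[OF mono]) (use Zm that in \<open>auto simp: J_def\<close>)
  have Psinn: "Psi_fun psi (\<bar>Z j x\<bar> / c) \<ge> 0" if "c \<ge> 0" for j x c
    using nn that by (simp add: Psi_fun_def)
  have goal: "orlicz_norm M (Psi_L psi (sqrt 6)) W \<le> ereal (sqrt 6) * ereal t"
  proof (cases "t > 0")
    case True
    have int1: "(\<integral>\<^sup>+ x. ennreal (Psi_fun psi (\<bar>Z j x\<bar> / t)) \<partial>M) \<le> 1" if "j \<in> J" for j
      by (rule orlicz_le[OF cv mono]) (use Zm that le_tau tau_eq True in \<open>auto simp: J_def\<close>)
    have pw: "Psi_L psi (sqrt 6) (\<bar>W x\<bar> / (sqrt 6 * t))
        \<le> (1 / (3 * (real m + 1))) * (\<Sum>j\<in>J. Psi_fun psi (\<bar>Z j x\<bar> / t) + 1)" for x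
    proof -
      obtain k where k: "k \<in> J" "(MAX j\<in>J. \<bar>Z j x\<bar>) = \<bar>Z k x\<bar>" using maxk by blast
      have "Psi_L psi (sqrt 6) (\<bar>W x\<bar> / (sqrt 6 * t)) = exp (psi (W x / t) / 3) - 1"
        using Wnn[of x] PsiL_eq[OF True] by simp
      also have "\<dots> \<le> (1 / (3 * (real m + 1))) * (\<Sum>j\<in>J. Psi_fun psi (\<bar>Z j x\<bar> / t) + 1)"
        using pw_main[OF cv p0 nn True u finJ k(1), of "\<lambda>j. \<bar>Z j x\<bar>"] k(2)
        unfolding W_def by simp
      finally show ?thesis .
    qed
    have "(\<integral>\<^sup>+ x. ennreal (Psi_L psi (sqrt 6) (\<bar>W x\<bar> / (sqrt 6 * t))) \<partial>M)
        \<le> ennreal ((1 / (3 * (real m + 1))) * (real (card J) * (1 + 1)))"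
      by (intro int_bound[OF P finJ meas[OF _ t_nn] int1 Psinn[OF t_nn] _ _ pw]) auto
    also have "\<dots> \<le> 1" using cardJ by (simp add: field_simps)
    finally have "sqrt 6 * t \<in> {c. c > 0 \<and> (\<integral>\<^sup>+ x. ennreal (Psi_L psi (sqrt 6) (\<bar>W x\<bar> / c)) \<partial>M) \<le> 1}"
      using True by simp
    hence "orlicz_norm M (Psi_L psi (sqrt 6)) W \<le> ereal (sqrt 6 * t)"
      unfolding orlicz_norm_def by (intro Inf_lower) auto
    thus ?thesis by simp
  next
    case False
    hence t0: "t = 0" using t_nn by simp
    have inS: "orlicz_norm M (Psi_L psi (sqrt 6)) W \<le> ereal (sqrt 6 * s)" if s: "s > 0" for s
    proof -
      have mp: "real m \<ge> 1" using m by simp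
      have sm: "s / real m > 0" using s mp by simp
      have int1: "(\<integral>\<^sup>+ x. ennreal (Psi_fun psi (\<bar>Z j x\<bar> / (s / real m))) \<partial>M) \<le> 1" if "j \<in> J" for j
      proof (rule orlicz_lt[OF mono])
        have "orlicz_norm M (Psi_fun psi) (Z j) \<le> ereal 0" using le_tau[OF that] tau_eq t0 by simp
        also have "\<dots> < ereal (s / real m)" using sm by simp
        finally show "orlicz_norm M (Psi_fun psi) (Z j) < ereal (s / real m)" .
      qed
      have pw: "Psi_L psi (sqrt 6) (\<bar>W x\<bar> / (sqrt 6 * s))
          \<le> (1 / real m) * (\<Sum>j\<in>J. Psi_fun psi (\<bar>Z j x\<bar> / (s / real m)) + 0)" for x
      proof -
        obtain k where k: "k \<in> J" "(MAX j\<in>J. \<bar>Z j x\<bar>) = \<bar>Z k x\<bar>" using maxk by blast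
        have eq: "W x = \<bar>Z k x\<bar>" unfolding W_def t0 using k(2) by simp
        have "Psi_L psi (sqrt 6) (\<bar>W x\<bar> / (sqrt 6 * s)) = exp (psi (\<bar>Z k x\<bar> / s) / 3) - 1"
          using Wnn[of x] PsiL_eq[OF s] eq by simp
        also have "exp (psi (\<bar>Z k x\<bar> / s) / 3) - 1 \<le> (1 / real m) * (\<Sum>j\<in>J. Psi_fun psi (\<bar>Z j x\<bar> / (s / real m)) + 0)"
          using pw_zero[OF cv p0 nn s m finJ k(1), of "\<lambda>j. \<bar>Z j x\<bar>"] by simp
        finally show ?thesis .
      qed
      have "(\<integral>\<^sup>+ x. ennreal (Psi_L psi (sqrt 6) (\<bar>W x\<bar> / (sqrt 6 * s))) \<partial>M)
          \<le> ennreal ((1 / real m) * (real (card J) * (1 + 0)))"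
        using sm by (intro int_bound[OF P finJ meas[OF _ less_imp_le[OF sm]] int1 Psinn[OF less_imp_le[OF sm]] _ _ pw]) auto
      also have "\<dots> \<le> 1" using cardJ mp by simp
      finally have "sqrt 6 * s \<in> {c. c > 0 \<and> (\<integral>\<^sup>+ x. ennreal (Psi_L psi (sqrt 6) (\<bar>W x\<bar> / c)) \<partial>M) \<le> 1}"
        using s by simp
      thus ?thesis unfolding orlicz_norm_def by (intro Inf_lower) auto
    qed
    have "orlicz_norm M (Psi_L psi (sqrt 6)) W \<le> 0"
    proof (rule ereal_le_epsilon2)
      fix e :: real assume e: "e > 0"
      have "orlicz_norm M (Psi_L psi (sqrt 6)) W \<le> ereal (sqrt 6 * (e / sqrt 6))"
        using e by (intro inS) simp
      thus "orlicz_norm M (Psi_L psi (sqrt 6)) W \<le> 0 + ereal e" by simp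
    qed
    thus ?thesis using t0 by (simp add: zero_ereal_def)
  qed
  have "(\<lambda>x. max 0 ((MAX j\<in>{1..m}. \<bar>Z j x\<bar>) - real_of_ereal \<tau> * Psi_inv psi (real m))) = W"
    unfolding W_def J_def t_def u_def ..
  thus ?thesis using goal tau_eq by simp
qed


end
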